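(* Let $r \in \mathbb{Q}_{>0}$ be such that $S_r$ is atomic. (1) If $r < 1$, then for every $x \in S_r$ with $|\mathsf{Z}(x)| > 1$, $\mathsf{L}(x) = \{\min \mathsf{L}(x) + k(\mathsf{d}(r) - \mathsf{n}(r)) : k \in \mathbb{N}_0\}$. (2) If $r \in \mathbb{N}$, then $|\mathsf{Z}(x)| = |\mathsf{L}(x)| = 1$ for all $x \in S_r$. (3) If $r \in \mathbb{Q}_{>1} \setminus \mathbb{N}$, then for every $x \in S_r$ with $|\mathsf{Z}(x)| > 1$, $\mathsf{L}(x) = \{\min \mathsf{L}(x) + k(\mathsf{n}(r) - \mathsf{d}(r)) : 0 \le k \le \frac{\max \mathsf{L}(x) - \min \mathsf{L}(x)}{\mathsf{n}(r) - \mathsf{d}(r)}\}$. In particular, for every $x \in S_r$, $\mathsf{L}(x)$ is an arithmetic progression with difference $|\mathsf{n}(r) - \mathsf{d}(r)|$.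
   Context: For $q \in \mathbb{Q}_{>0}$, $\mathsf{n}(q)$ and $\mathsf{d}(q)$ denote the unique positive coprime integers with $q = \mathsf{n}(q)/\mathsf{d}(q)$. For $r \in \mathbb{Q}_{>0}$, $S_r$ is the additive submonoid of $(\mathbb{Q}_{\ge 0},+)$ generated by $\{r^n : n \in \mathbb{N}_0\}$; it is atomic exactly when $r=1$ or $\mathsf{n}(r)>1$. If $r \in \mathbb{N}$ then $S_r = \mathbb{N}_0$ with unique atom $1$; if $r \notin \mathbb{N}$ and $S_r$ is atomic, its atoms are the pairwise distinct elements $r^n$, $n \in \mathbb{N}_0$. A factorization of $x$ is a formal finite sum of atoms (with multiplicities) whose value is $x$; $\mathsf{Z}(x)$ is the set of factorizations of $x$, $|z|$ is the number of atoms in $z$ counted with multiplicity, and $\mathsf{L}(x) = \{|z| : z \in \mathsf{Z}(x)\}$. *)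

theory Defs
  imports Complex_Main "HOL-Library.Multiset"
begin

definition numr :: "rat \<Rightarrow> int" where "numr q = fst (quotient_of q)"
definition denr :: "rat \<Rightarrow> int" where "denr q = snd (quotient_of q)"

definition Sr :: "rat \<Rightarrow> rat set" where
  "Sr r = {x. \<exists>m :: nat multiset. x = sum_mset (image_mset (\<lambda>n. r ^ n) m)}"

definition atoms :: "rat set \<Rightarrow> rat set" where
  "atoms S = {a \<in> S. a \<noteq> 0 \<and> (\<forall>b\<in>S. \<forall>c\<in>S. a = b + c \<longrightarrow> b = 0 \<or> c = 0)}"

definition Zf :: "rat set \<Rightarrow> rat \<Rightarrow> rat multiset set" where
  "Zf S x = {z. set_mset z \<subseteq> atoms S \<and> sum_mset z = x}"

definition Lf :: "rat set \<Rightarrow> rat \<Rightarrow> nat set" where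
  "Lf S x = size ` Zf S x"

definition atomic :: "rat set \<Rightarrow> bool" where
  "atomic S \<longleftrightarrow> (\<forall>x\<in>S. x \<noteq> 0 \<longrightarrow> Zf S x \<noteq> {})"

definition arith_prog :: "int set \<Rightarrow> int \<Rightarrow> bool" where
  "arith_prog A d \<longleftrightarrow> (\<exists>a. (\<exists>N::nat. A = {a + int i * d | i. i < N}) \<or> A = {a + int i * d | i. True})"

end

theory Submission
  imports Defs
begin


definition pv :: "rat \<Rightarrow> nat multiset \<Rightarrow> rat" where
  "pv r m = (\<Sum>i\<in>#m. r ^ i)"

definition JJ :: "int \<Rightarrow> int \<Rightarrow> nat \<Rightarrow> nat multiset \<Rightarrow> int" where
  "JJ n d K m = (\<Sum>i\<in>#m. n ^ i * d ^ (K - i))"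

lemma pv_add[simp]: "pv r (A + B) = pv r A + pv r B"
  by (simp add: pv_def)

lemma pv_rep[simp]: "pv r (replicate_mset k j) = of_nat k * r ^ j"
  by (simp add: pv_def)

lemma pv_empty[simp]: "pv r {#} = 0" by (simp add: pv_def)
lemma pv_addm[simp]: "pv r (add_mset a m) = r ^ a + pv r m" by (simp add: pv_def)

lemma JJ_empty[simp]: "JJ n d K {#} = 0" by (simp add: JJ_def)
lemma JJ_addm[simp]: "JJ n d K (add_mset a m) = n ^ a * d ^ (K - a) + JJ n d K m" by (simp add: JJ_def)

lemma dvd_pow_diff: "(x::int) - y dvd x ^ k - y ^ k"
proof (induction k)
  case 0 then show ?case by simp
next
  case (Suc k)
  have "x ^ Suc k - y ^ Suc k = x * (x ^ k - y ^ k) + (x - y) * y ^ k"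
    by (simp add: algebra_simps)
  then show ?case using Suc by (simp add: dvd_add)
qed

lemma pv_JJ:
  assumes "d > 0" "r = of_int n / of_int d" "set_mset m \<subseteq> {..K}"
  shows "of_int (JJ n d K m) = of_int d ^ K * pv r m"
  using assms(3)
proof (induction m)
  case empty then show ?case by simp
next
  case (add a m)
  have aK: "a \<le> K" using add.prems by auto
  have "of_int d ^ K * r ^ a = (of_int d ^ a * r ^ a) * of_int d ^ (K - a)"
    using aK by (metis le_add_diff_inverse mult.commute power_add mult.assoc)
  also have "of_int d ^ a * r ^ a = (of_int n :: rat) ^ a"
    using assms(1,2) by (simp add: power_divide)
  finally have "of_int d ^ K * r ^ a = (of_int n :: rat) ^ a * of_int d ^ (K - a)" .
  then show ?case using add by (simp add: distrib_left)
qed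

lemma JJ_cong:
  assumes "set_mset m \<subseteq> {..K}"
  shows "(n - d) dvd (JJ n d K m - int (size m) * n ^ K)"
  using assms
proof (induction m)
  case empty then show ?case by simp
next
  case (add a m)
  have aK: "a \<le> K" using add.prems by auto
  have "(n - d) dvd (n ^ a * (d ^ (K - a) - n ^ (K-a)))"
    by (metis dvd_mult dvd_pow_diff minus_diff_eq dvd_minus_iff)
  moreover have "n^a * n^(K-a) = n^K" using aK by (metis le_add_diff_inverse power_add)
  ultimately have "(n - d) dvd (n ^ a * d ^ (K - a) - n ^ K)"
    by (simp add: algebra_simps)
  from dvd_add[OF this add.IH] add.prems show ?case by (simp add: algebra_simps)
qed


lemma coprime_diff_n:
  assumes "coprime (n::int) d" shows "coprime (n - d) n"
proof (rule coprimeI)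
  fix c assume c1: "c dvd n - d" and c2: "c dvd n"
  then have "c dvd n - (n - d)" by (rule dvd_diff[rotated])
  then have "c dvd d" by simp
  with c2 assms show "is_unit c" using coprime_common_divisor by blast
qed

lemma bound_K: "\<exists>K. set_mset (m1::nat multiset) \<subseteq> {..K} \<and> set_mset m2 \<subseteq> {..K}"
proof -
  let ?K = "Max (insert 0 (set_mset (m1 + m2)))"
  have "set_mset m1 \<subseteq> {..?K}" "set_mset m2 \<subseteq> {..?K}" by auto
  then show ?thesis by blast
qed

lemma JJ_eq:
  assumes "d > 0" "r = of_int n / of_int d" "pv r m1 = pv r m2"
    "set_mset m1 \<subseteq> {..K}" "set_mset m2 \<subseteq> {..K}"
  shows "JJ n d K m1 = JJ n d K m2"
proof -
  have "(of_int (JJ n d K m1) :: rat) = of_int (JJ n d K m2)"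
    using pv_JJ[OF assms(1,2,4)] pv_JJ[OF assms(1,2,5)] assms(3) by simp
  then show ?thesis by simp
qed

lemma size_cong:
  assumes "d > 0" "r = of_int n / of_int d" "coprime n d" "pv r m1 = pv r m2"
  shows "(n - d) dvd (int (size m1) - int (size m2))"
proof -
  obtain K where K: "set_mset m1 \<subseteq> {..K}" "set_mset m2 \<subseteq> {..K}" using bound_K by blast
  have e: "JJ n d K m1 = JJ n d K m2" using JJ_eq[OF assms(1,2,4) K] .
  have "(n - d) dvd (JJ n d K m2 - int (size m2) * n ^ K) - (JJ n d K m1 - int (size m1) * n ^ K)"
    using JJ_cong[OF K(1)] JJ_cong[OF K(2)] by (rule dvd_diff[rotated])
  then have "(n - d) dvd (int (size m1) - int (size m2)) * n ^ K"
    using e by (simp add: algebra_simps)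
  moreover have "coprime (n - d) (n ^ K)" using coprime_diff_n[OF assms(3)] by simp
  ultimately show ?thesis using coprime_dvd_mult_left_iff by blast
qed

lemma uniq_up:
  fixes c :: "nat \<Rightarrow> int"
  assumes "n > 0" "coprime n d" "\<forall>i. \<bar>c i\<bar> < n"
    "(\<Sum>i\<le>K. c i * n ^ i * d ^ (K - i)) = 0"
  shows "\<forall>i\<le>K. c i = 0"
  using assms(3,4)
proof (induction K arbitrary: c)
  case 0 then show ?case by simp
next
  case (Suc K)
  have "(\<Sum>i\<le>Suc K. c i * n ^ i * d ^ (Suc K - i)) =
        c 0 * d ^ Suc K + (\<Sum>i\<le>K. c (Suc i) * n ^ (Suc i) * d ^ (K - i))"
    unfolding sum.atMost_Suc_shift by simp
  also have "(\<Sum>i\<le>K. c (Suc i) * n ^ (Suc i) * d ^ (K - i)) = n * (\<Sum>i\<le>K. c (Suc i) * n ^ i * d ^ (K - i))"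
    by (simp add: sum_distrib_left algebra_simps)
  finally have eq: "c 0 * d ^ Suc K + n * (\<Sum>i\<le>K. c (Suc i) * n ^ i * d ^ (K - i)) = 0" using Suc.prems by simp
  then have "c 0 * d ^ Suc K = n * (- (\<Sum>i\<le>K. c (Suc i) * n ^ i * d ^ (K - i)))" by linarith
  then have "n dvd c 0 * d ^ Suc K" by (metis dvd_triv_left)
  moreover have "coprime n (d ^ Suc K)" using assms(2) by simp
  ultimately have "n dvd c 0" using coprime_dvd_mult_left_iff by blast
  moreover have "\<bar>c 0\<bar> < n" using Suc.prems(1) by simp
  ultimately have c0: "c 0 = 0" using dvd_imp_le_int[of "c 0" n] assms(1) by force
  with eq assms(1) have "(\<Sum>i\<le>K. c (Suc i) * n ^ i * d ^ (K - i)) = 0" by simp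
  from Suc.IH[of "\<lambda>i. c (Suc i)", OF _ this] Suc.prems(1)
  have "\<forall>i\<le>K. c (Suc i) = 0" by simp
  with c0 show ?case by (metis Suc_le_mono not0_implies_Suc)
qed

lemma uniq_down:
  fixes c :: "nat \<Rightarrow> int"
  assumes "d > 0" "coprime n d" "\<forall>i. i \<ge> 1 \<longrightarrow> \<bar>c i\<bar> < d"
    "(\<Sum>i\<le>K. c i * n ^ i * d ^ (K - i)) = 0"
  shows "\<forall>i\<le>K. c i = 0"
  using assms(4)
proof (induction K)
  case 0 then show ?case by simp
next
  case (Suc K)
  have "(\<Sum>i\<le>K. c i * n ^ i * d ^ (Suc K - i)) = d * (\<Sum>i\<le>K. c i * n ^ i * d ^ (K - i))"
    by (simp add: sum_distrib_left algebra_simps Suc_diff_le)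
  then have eq: "d * (\<Sum>i\<le>K. c i * n ^ i * d ^ (K - i)) + c (Suc K) * n ^ Suc K = 0"
    using Suc.prems by simp
  then have "c (Suc K) * n ^ Suc K = d * (- (\<Sum>i\<le>K. c i * n ^ i * d ^ (K - i)))" by linarith
  then have "d dvd c (Suc K) * n ^ Suc K" by (metis dvd_triv_left)
  moreover have "coprime d (n ^ Suc K)" using assms(2) by (simp add: coprime_commute)
  ultimately have "d dvd c (Suc K)" using coprime_dvd_mult_left_iff by blast
  moreover have "\<bar>c (Suc K)\<bar> < d" using assms(3) by simp
  ultimately have c0: "c (Suc K) = 0" using dvd_imp_le_int[of "c (Suc K)" d] assms(1) by force
  with eq assms(1) have "(\<Sum>i\<le>K. c i * n ^ i * d ^ (K - i)) = 0" by simp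
  from Suc.IH[OF this] have "\<forall>i\<le>K. c i = 0" .
  with c0 show ?case by (metis le_Suc_eq)
qed


lemma JJ_count:
  assumes "set_mset m \<subseteq> {..K}"
  shows "JJ n d K m = (\<Sum>i\<le>K. int (count m i) * n ^ i * d ^ (K - i))"
  using assms
proof (induction m)
  case empty then show ?case by simp
next
  case (add a m)
  have aK: "a \<le> K" using add.prems by auto
  have ci: "\<And>i. int (count (add_mset a m) i) * n ^ i * d ^ (K - i) =
        int (count m i) * n ^ i * d ^ (K - i) + (if i = a then n ^ i * d ^ (K - i) else 0)"
    by (auto simp: algebra_simps)
  have "(\<Sum>i\<le>K. int (count (add_mset a m) i) * n ^ i * d ^ (K - i)) =
        (\<Sum>i\<le>K. int (count m i) * n ^ i * d ^ (K - i)) + (\<Sum>i\<le>K. (if i = a then n ^ i * d ^ (K - i) else 0))"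
    unfolding ci sum.distrib by (rule refl)
  also have "(\<Sum>i\<le>K. (if i = a then n ^ i * d ^ (K - i) else 0)) = n ^ a * d ^ (K - a)"
    using aK by (simp add: sum.delta)
  finally show ?case using add by simp
qed

lemma uniq_ms_up:
  assumes "n > 0" "d > 0" "coprime n d" "r = of_int n / of_int d" "pv r m1 = pv r m2"
    "\<forall>i. int (count m1 i) < n" "\<forall>i. int (count m2 i) < n"
  shows "m1 = m2"
proof -
  obtain K where K: "set_mset m1 \<subseteq> {..K}" "set_mset m2 \<subseteq> {..K}" using bound_K by blast
  have e: "JJ n d K m1 = JJ n d K m2" using JJ_eq[OF assms(2,4,5) K] .
  let ?c = "\<lambda>i. int (count m1 i) - int (count m2 i)"
  have "(\<Sum>i\<le>K. ?c i * n ^ i * d ^ (K - i)) = JJ n d K m1 - JJ n d K m2"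
    unfolding JJ_count[OF K(1)] JJ_count[OF K(2)] by (simp add: sum_subtractf[symmetric] algebra_simps)
  with e have "(\<Sum>i\<le>K. ?c i * n ^ i * d ^ (K - i)) = 0" by simp
  moreover have "\<forall>i. \<bar>?c i\<bar> < n"
  proof
    fix i show "\<bar>?c i\<bar> < n" using assms(6)[rule_format, of i] assms(7)[rule_format, of i] by linarith
  qed
  ultimately have "\<forall>i\<le>K. ?c i = 0" using uniq_up[OF assms(1,3), of ?c K] by blast
  then have "\<forall>i. count m1 i = count m2 i"
  proof (intro allI)
    fix i
    assume h: "\<forall>i\<le>K. ?c i = 0"
    show "count m1 i = count m2 i"
    proof (cases "i \<le> K")
      case True then show ?thesis using h by simp
    next
      case False
      then have "i \<notin> set_mset m1" "i \<notin> set_mset m2" using K by auto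
      then show ?thesis by (metis not_in_iff)
    qed
  qed
  then show ?thesis by (simp add: multiset_eqI)
qed

lemma uniq_ms_down:
  assumes "d > 0" "coprime n d" "r = of_int n / of_int d" "pv r m1 = pv r m2"
    "\<forall>i. i \<ge> 1 \<longrightarrow> int (count m1 i) < d" "\<forall>i. i \<ge> 1 \<longrightarrow> int (count m2 i) < d"
  shows "m1 = m2"
proof -
  obtain K where K: "set_mset m1 \<subseteq> {..K}" "set_mset m2 \<subseteq> {..K}" using bound_K by blast
  have e: "JJ n d K m1 = JJ n d K m2" using JJ_eq[OF assms(1,3,4) K] .
  let ?c = "\<lambda>i. int (count m1 i) - int (count m2 i)"
  have "(\<Sum>i\<le>K. ?c i * n ^ i * d ^ (K - i)) = JJ n d K m1 - JJ n d K m2"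
    unfolding JJ_count[OF K(1)] JJ_count[OF K(2)] by (simp add: sum_subtractf[symmetric] algebra_simps)
  with e have "(\<Sum>i\<le>K. ?c i * n ^ i * d ^ (K - i)) = 0" by simp
  moreover have "\<forall>i. i \<ge> 1 \<longrightarrow> \<bar>?c i\<bar> < d"
  proof (intro allI impI)
    fix i :: nat assume "i \<ge> 1" then show "\<bar>?c i\<bar> < d" using assms(5)[rule_format, of i] assms(6)[rule_format, of i] by linarith
  qed
  ultimately have "\<forall>i\<le>K. ?c i = 0" using uniq_down[OF assms(1,2), of ?c K] by blast
  then have "\<forall>i. count m1 i = count m2 i"
  proof (intro allI)
    fix i
    assume h: "\<forall>i\<le>K. ?c i = 0"
    show "count m1 i = count m2 i"
    proof (cases "i \<le> K")
      case True then show ?thesis using h by simp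
    next
      case False
      then have "i \<notin> set_mset m1" "i \<notin> set_mset m2" using K by auto
      then show ?thesis by (metis not_in_iff)
    qed
  qed
  then show ?thesis by (simp add: multiset_eqI)
qed

lemma rep_sub: "count m j \<ge> k \<Longrightarrow> replicate_mset k j \<subseteq># m"
  by (simp add: subseteq_mset_def)

lemma trade_up:
  assumes "D > 0" "r = of_nat N / of_nat D" "count m j \<ge> N"
  defines "m' \<equiv> m - replicate_mset N j + replicate_mset D (Suc j)"
  shows "pv r m' = pv r m" "size m' + N = size m + D" "count m' (Suc j) \<ge> D"
proof -
  have sub: "replicate_mset N j \<subseteq># m" by (rule rep_sub[OF assms(3)])
  have "pv r m = pv r (m - replicate_mset N j) + of_nat N * r ^ j"
    using subset_mset.diff_add[OF sub] pv_add pv_rep by metis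
  moreover have "of_nat D * r ^ Suc j = of_nat N * r ^ j" using assms(1,2) by simp
  moreover have "pv r m' = pv r (m - replicate_mset N j) + of_nat D * r ^ Suc j" unfolding m'_def by simp
  ultimately show "pv r m' = pv r m" by linarith
  show "size m' + N = size m + D" unfolding m'_def using size_Diff_submset[OF sub] size_mset_mono[OF sub] by simp
  show "count m' (Suc j) \<ge> D" unfolding m'_def by simp
qed

lemma trade_down:
  assumes "D > 0" "r = of_nat N / of_nat D" "count m (Suc j) \<ge> D"
  defines "m' \<equiv> m - replicate_mset D (Suc j) + replicate_mset N j"
  shows "pv r m' = pv r m" "size m' + D = size m + N" "count m' j \<ge> N"
proof -
  have sub: "replicate_mset D (Suc j) \<subseteq># m" by (rule rep_sub[OF assms(3)])
  have "pv r m = pv r (m - replicate_mset D (Suc j)) + of_nat D * r ^ Suc j"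
    using subset_mset.diff_add[OF sub] pv_add pv_rep by metis
  moreover have "of_nat D * r ^ Suc j = of_nat N * r ^ j" using assms(1,2) by simp
  moreover have "pv r m' = pv r (m - replicate_mset D (Suc j)) + of_nat N * r ^ j" unfolding m'_def by simp
  ultimately show "pv r m' = pv r m" by linarith
  show "size m' + D = size m + N" unfolding m'_def using size_Diff_submset[OF sub] size_mset_mono[OF sub] by simp
  show "count m' j \<ge> N" unfolding m'_def by simp
qed


lemma desc_chain:
  assumes "D > 0" "r = of_nat N / of_nat D" "N > D"
  shows "\<exists>w. (\<forall>i. count w i < N) \<and> pv r w = pv r m \<and>
    (\<exists>q. size m = size w + q * (N - D) \<and> (\<forall>k\<le>q. \<exists>m'. pv r m' = pv r m \<and> size m' = size m - k * (N - D)))"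
proof (induction "size m" arbitrary: m rule: less_induct)
  case less
  show ?case
  proof (cases "\<forall>i. count m i < N")
    case True
    then show ?thesis by (intro exI[of _ m] conjI exI[of _ 0]) auto
  next
    case False
    then obtain j where j: "count m j \<ge> N" by (auto simp: not_less)
    define m' where "m' = m - replicate_mset N j + replicate_mset D (Suc j)"
    have t: "pv r m' = pv r m" "size m' + N = size m + D"
      using trade_up[OF assms(1,2) j] unfolding m'_def by auto
    then have "size m' < size m" using assms(3) by linarith
    from less[OF this] obtain w q where w: "\<forall>i. count w i < N" "pv r w = pv r m'"
      "size m' = size w + q * (N - D)" "\<forall>k\<le>q. \<exists>m''. pv r m'' = pv r m' \<and> size m'' = size m' - k * (N - D)"
      by blast
    have sm: "size m = size w + Suc q * (N - D)" using t(2) w(3) assms(3) by simp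
    have "\<forall>k\<le>Suc q. \<exists>m''. pv r m'' = pv r m \<and> size m'' = size m - k * (N - D)"
    proof (intro allI impI)
      fix k assume k: "k \<le> Suc q"
      show "\<exists>m''. pv r m'' = pv r m \<and> size m'' = size m - k * (N - D)"
      proof (cases k)
        case 0 then show ?thesis by auto
      next
        case (Suc k')
        then have "k' \<le> q" using k by simp
        then obtain m'' where "pv r m'' = pv r m'" "size m'' = size m' - k' * (N - D)" using w(4) by blast
        moreover have "size m' = size m - (N - D)" using t(2) assms(3) by simp
        ultimately show ?thesis using t(1) Suc by (intro exI[of _ m'']) (simp add: diff_diff_add)
      qed
    qed
    then show ?thesis using w(1,2) t(1) sm by (intro exI[of _ w] conjI exI[of _ "Suc q"]) auto
  qed
qed

lemma down_chain:
  assumes "D > 0" "r = of_nat N / of_nat D" "N < D"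
  shows "\<exists>w. (\<forall>i. i \<ge> 1 \<longrightarrow> count w i < D) \<and> pv r w = pv r m \<and>
    ((\<forall>i. i \<ge> 1 \<longrightarrow> count m i < D) \<or> (\<exists>j. count w j \<ge> N))"
proof (induction "size m" arbitrary: m rule: less_induct)
  case less
  show ?case
  proof (cases "\<forall>i. i \<ge> 1 \<longrightarrow> count m i < D")
    case True
    then show ?thesis by (intro exI[of _ m]) auto
  next
    case False
    then obtain i where i: "i \<ge> 1" "count m i \<ge> D" by (auto simp: not_less)
    then obtain j where ij: "i = Suc j" by (cases i) auto
    define m' where "m' = m - replicate_mset D (Suc j) + replicate_mset N j"
    have t: "pv r m' = pv r m" "size m' + D = size m + N" "count m' j \<ge> N"
      using trade_down[OF assms(1,2), of m j] i ij unfolding m'_def by auto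
    then have "size m' < size m" using assms(3) by linarith
    from less[OF this] obtain w where w: "\<forall>i. i \<ge> 1 \<longrightarrow> count w i < D" "pv r w = pv r m'"
      "(\<forall>i. i \<ge> 1 \<longrightarrow> count m' i < D) \<or> (\<exists>j. count w j \<ge> N)"
      by blast
    show ?thesis
    proof (cases "\<forall>i. i \<ge> 1 \<longrightarrow> count m' i < D")
      case True
      then show ?thesis using t by (intro exI[of _ m']) auto
    next
      case False
      then show ?thesis using w t by (intro exI[of _ w]) auto
    qed
  qed
qed

lemma up_chain:
  assumes "D > 0" "r = of_nat N / of_nat D" "N \<le> D" "count m j \<ge> N"
  shows "\<exists>m'. pv r m' = pv r m \<and> size m' = size m + k * (D - N)"
  using assms(4)
proof (induction k arbitrary: m j)
  case 0 then show ?case by auto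
next
  case (Suc k)
  define m1 where "m1 = m - replicate_mset N j + replicate_mset D (Suc j)"
  have t: "pv r m1 = pv r m" "size m1 + N = size m + D" "count m1 (Suc j) \<ge> D"
    using trade_up[OF assms(1,2) Suc.prems] unfolding m1_def by auto
  then have "count m1 (Suc j) \<ge> N" using assms(3) by linarith
  from Suc.IH[OF this] obtain m' where "pv r m' = pv r m1" "size m' = size m1 + k * (D - N)" by blast
  then show ?case using t assms(3) by (intro exI[of _ m']) auto
qed


lemma rat_parts:
  assumes "r > 0"
  shows "numr r > 0" "denr r > 0" "coprime (numr r) (denr r)" "r = of_int (numr r) / of_int (denr r)"
proof -
  have q: "quotient_of r = (numr r, denr r)" by (simp add: numr_def denr_def)
  show d: "denr r > 0" using quotient_of_denom_pos[OF q] .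
  show "coprime (numr r) (denr r)" using quotient_of_coprime[OF q] .
  show eq: "r = of_int (numr r) / of_int (denr r)" using quotient_of_div[OF q] .
  have "of_int (numr r) = r * of_int (denr r)" using eq d by (simp add: field_simps)
  moreover have "r * of_int (denr r) > 0" using assms d by simp
  ultimately show "numr r > 0" by simp
qed

lemma Sr_pv: "Sr r = range (pv r)"
  by (auto simp: Sr_def pv_def)

lemma pv_nonneg: "r > 0 \<Longrightarrow> pv r m \<ge> 0"
  by (induction m) auto

lemma pv_zero_iff: "r > 0 \<Longrightarrow> pv r m = 0 \<longleftrightarrow> m = {#}"
proof (induction m)
  case empty then show ?case by simp
next
  case (add a m)
  have "pv r m \<ge> 0" using pv_nonneg add.prems by blast
  moreover have "r ^ a > 0" using add.prems by simp
  ultimately show ?case by simp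
qed

lemma JJ_dvd_low:
  assumes "\<forall>j\<in>#m. j < K"
  shows "d dvd JJ n d K m"
  using assms
proof (induction m)
  case empty then show ?case by simp
next
  case (add a m)
  then have "a < K" by simp
  then have "d dvd d ^ (K - a)" by (simp add: dvd_power)
  then show ?case using add by simp
qed

lemma JJ_dvd_high:
  assumes "\<forall>j\<in>#m. j > i"
  shows "n ^ Suc i dvd JJ n d K m"
  using assms
proof (induction m)
  case empty then show ?case by simp
next
  case (add a m)
  then have "a > i" by simp
  then have "Suc i \<le> a" by simp
  then have "n ^ Suc i dvd n ^ a" by (rule le_imp_power_dvd)
  then show ?case using add by simp
qed

lemma atoms_nonint:
  assumes D: "D > 0" and r: "r = of_nat N / of_nat D" and cop: "coprime (int N) (int D)"
    and D1: "D \<noteq> 1" and N1: "N > 1"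
  shows "atoms (Sr r) = range (\<lambda>i. r ^ i)"
proof -
  have rpos: "r > 0" using D N1 r by simp
  have r1: "r \<noteq> 1"
  proof
    assume "r = 1"
    then have "(of_nat N :: rat) = of_nat D" using r D by (simp add: field_simps)
    then have "N = D" by simp
    then have "coprime (int N) (int N)" using cop by simp
    then show False using N1 by simp
  qed
  have incl: "range (\<lambda>i. r ^ i) \<subseteq> Sr r" unfolding Sr_pv
  proof
    fix a assume "a \<in> range (\<lambda>i. r ^ i)"
    then obtain i where "a = r ^ i" by blast
    then have "a = pv r {#i#}" by (simp add: pv_def)
    then show "a \<in> range (pv r)" by blast
  qed
  show ?thesis
  proof
    show "atoms (Sr r) \<subseteq> range (\<lambda>i. r ^ i)"
    proof
      fix a assume a: "a \<in> atoms (Sr r)"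
      then obtain m where m: "a = pv r m" and nz: "a \<noteq> 0" and at: "\<forall>b\<in>Sr r. \<forall>c\<in>Sr r. a = b + c \<longrightarrow> b = 0 \<or> c = 0"
        unfolding atoms_def Sr_pv by blast
      then have "m \<noteq> {#}" by auto
      then obtain i m0 where m0: "m = add_mset i m0" by (metis multiset_cases)
      have "a = r ^ i + pv r m0" using m m0 by simp
      moreover have "r ^ i \<in> Sr r" using incl by blast
      moreover have "pv r m0 \<in> Sr r" unfolding Sr_pv by blast
      moreover have "r ^ i \<noteq> 0" using rpos by simp
      ultimately have "pv r m0 = 0" using at by blast
      then have "m0 = {#}" using pv_zero_iff[OF rpos] by blast
      then show "a \<in> range (\<lambda>i. r ^ i)" using m m0 by simp
    qed
  next
    show "range (\<lambda>i. r ^ i) \<subseteq> atoms (Sr r)"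
    proof
      fix a assume "a \<in> range (\<lambda>i. r ^ i)"
      then obtain i where ai: "a = r ^ i" by blast
      have "\<forall>b\<in>Sr r. \<forall>c\<in>Sr r. a = b + c \<longrightarrow> b = 0 \<or> c = 0"
      proof (intro ballI impI, rule ccontr)
        fix b c assume "b \<in> Sr r" "c \<in> Sr r" and abc: "a = b + c" and nz: "\<not> (b = 0 \<or> c = 0)"
        then obtain m1 m2 where b: "b = pv r m1" and c: "c = pv r m2" unfolding Sr_pv by blast
        then have "m1 \<noteq> {#}" using nz by auto
        then obtain j m0 where m0: "m1 = add_mset j m0" by (metis multiset_cases)
        let ?m = "m1 + m2"
        have pm: "pv r ?m = r ^ i" using abc ai b c by simp
        have rest: "\<forall>k\<in>#?m. r ^ k < r ^ i"
        proof
          fix k assume "k \<in># ?m"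
          then obtain m' where mk: "?m = add_mset k m'" by (metis multi_member_split)
          have "m' \<noteq> {#}"
          proof
            assume "m' = {#}"
            then have "m1 + m2 = {#k#}" using mk by simp
            then have "m1 = {#} \<or> m2 = {#}" by (metis union_is_single)
            then show False using nz b c by auto
          qed
          then have "pv r m' > 0" using pv_zero_iff[OF rpos] pv_nonneg[OF rpos] by (metis order_le_less)
          moreover have "r ^ i = r ^ k + pv r m'" using pm mk by simp
          ultimately show "r ^ k < r ^ i" by simp
        qed
        have "r < 1 \<or> r > 1" using r1 by auto
        then show False
        proof
          assume "r > 1"
          then have lt: "\<forall>k\<in>#?m. k < i"
            using rest power_less_imp_less_exp[OF \<open>r > 1\<close>] by simp
          have "of_int (JJ (int N) (int D) i ?m) = of_int (int D) ^ i * pv r ?m"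
          proof (rule pv_JJ)
            show "set_mset ?m \<subseteq> {..i}"
            proof
              fix x assume "x \<in> set_mset ?m" then have "x < i" using lt by blast
              then show "x \<in> {..i}" by simp
            qed
          qed (use D r in auto)
          also have "\<dots> = of_int (int N ^ i)" using pm r D by (simp add: power_divide)
          finally have "JJ (int N) (int D) i ?m = int N ^ i" by (simp only: of_int_eq_iff)
          moreover have "int D dvd JJ (int N) (int D) i ?m" by (rule JJ_dvd_low) (use lt in auto)
          ultimately have "int D dvd int N ^ i" by simp
          moreover have "coprime (int D) (int N ^ i)" using cop by (simp add: coprime_commute)
          ultimately have "is_unit (int D)" using coprime_common_divisor[of "int D" "int N ^ i" "int D"] by simp
          then show False using D1 by simp
        next
          assume "r < 1"
          then have gt: "\<forall>k\<in>#?m. k > i"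
            using rest power_strict_decreasing_iff[OF rpos \<open>r < 1\<close>] by simp
          obtain K where K: "set_mset ?m \<subseteq> {..K}" using bound_K by blast
          have iK: "i < K" using gt K \<open>m1 \<noteq> {#}\<close> m0 by force
          have "of_int (JJ (int N) (int D) K ?m) = of_int (int D) ^ K * pv r ?m"
            by (rule pv_JJ) (use D r K in auto)
          also have "\<dots> = of_int (int N ^ i * int D ^ (K - i))"
          proof -
            have e1: "(of_nat D :: rat) ^ K = of_nat D ^ i * of_nat D ^ (K - i)" using iK by (simp flip: power_add)
            have e2: "(of_nat D :: rat) ^ i * r ^ i = of_nat N ^ i" using r D by (simp add: power_divide)
            have "of_int (int D) ^ K * pv r ?m = (of_nat D ^ i * r ^ i) * of_nat D ^ (K - i)"
              using pm e1 by simp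
            also have "\<dots> = of_nat N ^ i * of_nat D ^ (K - i)" using e2 by simp
            finally show ?thesis by simp
          qed
          finally have "JJ (int N) (int D) K ?m = int N ^ i * int D ^ (K - i)" by (simp only: of_int_eq_iff)
          moreover have "int N ^ Suc i dvd JJ (int N) (int D) K ?m" by (rule JJ_dvd_high) (use gt in auto)
          ultimately have "int N ^ Suc i dvd int N ^ i * int D ^ (K - i)" by simp
          moreover have "int N ^ Suc i = int N ^ i * int N" by simp
          ultimately have "int N ^ i * int N dvd int N ^ i * int D ^ (K - i)" by metis
          then have "int N dvd int D ^ (K - i)" using N1 by (subst (asm) dvd_mult_cancel_left) auto
          moreover have "coprime (int N) (int D ^ (K - i))" using cop by simp
          ultimately have "is_unit (int N)" using coprime_common_divisor[of "int N" "int D ^ (K - i)" "int N"] by simp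
          then show False using N1 by simp
        qed
      qed
      moreover have "a \<in> Sr r" using incl ai by blast
      moreover have "a \<noteq> 0" using ai rpos by simp
      ultimately show "a \<in> atoms (Sr r)" unfolding atoms_def by blast
    qed
  qed
qed


lemma Zf_char:
  assumes "atoms (Sr r) = range (\<lambda>i. r ^ i)"
  shows "Zf (Sr r) x = image_mset (\<lambda>i. r ^ i) ` {m. pv r m = x}"
proof
  show "Zf (Sr r) x \<subseteq> image_mset (\<lambda>i. r ^ i) ` {m. pv r m = x}"
  proof
    fix z assume z: "z \<in> Zf (Sr r) x"
    then have sub: "set_mset z \<subseteq> range (\<lambda>i. r ^ i)" and sz: "sum_mset z = x"
      using assms unfolding Zf_def by auto
    let ?m = "image_mset (inv (\<lambda>i. r ^ i)) z"
    have "image_mset (\<lambda>i. r ^ i) ?m = image_mset (\<lambda>y. y) z"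
      unfolding multiset.map_comp comp_def
      by (rule image_mset_cong) (use sub in \<open>auto intro: f_inv_into_f\<close>)
    then have zm: "z = image_mset (\<lambda>i. r ^ i) ?m" by simp
    then have "pv r ?m = x" using sz by (simp add: pv_def)
    then show "z \<in> image_mset (\<lambda>i. r ^ i) ` {m. pv r m = x}" using zm by blast
  qed
next
  show "image_mset (\<lambda>i. r ^ i) ` {m. pv r m = x} \<subseteq> Zf (Sr r) x"
    using assms unfolding Zf_def pv_def by auto
qed

lemma Lf_char:
  assumes "atoms (Sr r) = range (\<lambda>i. r ^ i)"
  shows "Lf (Sr r) x = size ` {m. pv r m = x}"
  unfolding Lf_def Zf_char[OF assms] image_image by simp

lemma img_inj:
  fixes r :: rat
  assumes "r > 0" "r \<noteq> 1" "image_mset (\<lambda>i. r ^ i) m1 = image_mset (\<lambda>i. r ^ i) m2"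
  shows "m1 = m2"
proof -
  have inj: "inj (\<lambda>i::nat. r ^ i)" using assms(1,2) power_inject_exp'[of r] by (auto simp: inj_def)
  have "image_mset (inv (\<lambda>i. r ^ i)) (image_mset (\<lambda>i. r ^ i) m1) = image_mset (inv (\<lambda>i. r ^ i)) (image_mset (\<lambda>i. r ^ i) m2)"
    using assms(3) by simp
  then show ?thesis unfolding multiset.map_comp inv_o_cancel[OF inj] by simp
qed

lemma pv_ge_size: "r \<ge> 1 \<Longrightarrow> pv r m \<ge> of_nat (size m)"
proof (induction m)
  case empty then show ?case by simp
next
  case (add a m)
  then have "r ^ a \<ge> 1" by (simp add: one_le_power)
  moreover have "pv r m \<ge> of_nat (size m)" using add by simp
  ultimately show ?case by (simp add: add_mono)
qed


lemma Inf_le_nat: "(a::nat) \<in> A \<Longrightarrow> Inf A \<le> a"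
  by (simp add: Inf_nat_def Least_le)

lemma part1_E:
  assumes D: "D > 0" and r: "r = of_nat N / of_nat D" and cop: "coprime (int N) (int D)" and ND: "N < D"
    and m12: "m1 \<noteq> m2" "pv r m1 = x" "pv r m2 = x"
  defines "L \<equiv> size ` {m. pv r m = x}"
  shows "int ` L = {int (Inf L) + int k * (int D - int N) | k. True}"
proof -
  have rr: "r = of_int (int N) / of_int (int D)" using r by simp
  have D': "int D > 0" using D by simp
  have Lne: "L \<noteq> {}" using m12 by (auto simp: L_def)
  have "Inf L \<in> L" using Lne by (rule Inf_nat_def1)
  then obtain m0 where m0: "pv r m0 = x" "size m0 = Inf L" by (auto simp: L_def)
  have minimal: "Inf L \<le> size m" if "pv r m = x" for m
    using that by (intro Inf_le_nat) (auto simp: L_def)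
  have irr0: "\<forall>i. i \<ge> 1 \<longrightarrow> count m0 i < D"
  proof (rule ccontr)
    assume "\<not> ?thesis"
    then obtain i where i: "i \<ge> 1" "count m0 i \<ge> D" by (auto simp: not_less)
    then obtain j where ij: "i = Suc j" by (cases i) auto
    define m' where "m' = m0 - replicate_mset D (Suc j) + replicate_mset N j"
    have t: "pv r m' = pv r m0" "size m' + D = size m0 + N"
      using trade_down[OF D r, of m0 j] i ij unfolding m'_def by auto
    then have "size m' < size m0" using ND by linarith
    moreover have "Inf L \<le> size m'" using minimal t m0 by simp
    ultimately show False using m0 by simp
  qed
  have irr0': "\<forall>i. i \<ge> 1 \<longrightarrow> int (count m0 i) < int D" using irr0 by simp
  have "\<not> ((\<forall>i. i \<ge> 1 \<longrightarrow> count m1 i < D) \<and> (\<forall>i. i \<ge> 1 \<longrightarrow> count m2 i < D))"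
  proof
    assume h: "(\<forall>i. i \<ge> 1 \<longrightarrow> count m1 i < D) \<and> (\<forall>i. i \<ge> 1 \<longrightarrow> count m2 i < D)"
    have "m1 = m2" by (rule uniq_ms_down[OF D' cop rr]) (use h m12 in auto)
    then show False using m12 by simp
  qed
  then obtain m where m: "pv r m = x" "\<not> (\<forall>i. i \<ge> 1 \<longrightarrow> count m i < D)" using m12 by blast
  from down_chain[OF D r ND, of m] m obtain w j where
    w: "\<forall>i. i \<ge> 1 \<longrightarrow> count w i < D" "pv r w = x" "count w j \<ge> N" by blast
  have "w = m0" by (rule uniq_ms_down[OF D' cop rr]) (use w m0 irr0 in auto)
  with w have cj: "count m0 j \<ge> N" by simp
  show ?thesis
  proof
    show "int ` L \<subseteq> {int (Inf L) + int k * (int D - int N) | k. True}"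
    proof
      fix y assume "y \<in> int ` L"
      then obtain m' where m': "pv r m' = x" "y = int (size m')" by (auto simp: L_def)
      have "(int N - int D) dvd (int (size m') - int (size m0))"
        by (rule size_cong[OF D' rr cop]) (use m' m0 in simp)
      then obtain t where t: "int (size m') - int (size m0) = (int N - int D) * t" by (auto simp: dvd_def)
      then have t2: "int (size m') - int (size m0) = (int D - int N) * (- t)" by (simp add: algebra_simps)
      have "int (size m') - int (size m0) \<ge> 0" using minimal[OF m'(1)] m0 by simp
      then have "(int D - int N) * (- t) \<ge> 0" using t2 by simp
      moreover have "int D - int N > 0" using ND by simp
      ultimately have "- t \<ge> 0" using zero_le_mult_iff by (metis not_less)
      then have "y = int (Inf L) + int (nat (- t)) * (int D - int N)" using t2 m' m0 by (simp add: algebra_simps)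
      then show "y \<in> {int (Inf L) + int k * (int D - int N) | k. True}" by blast
    qed
  next
    show "{int (Inf L) + int k * (int D - int N) | k. True} \<subseteq> int ` L"
    proof
      fix y assume "y \<in> {int (Inf L) + int k * (int D - int N) | k. True}"
      then obtain k where y: "y = int (Inf L) + int k * (int D - int N)" by blast
      from up_chain[OF D r _ cj, of k] ND obtain m' where m': "pv r m' = pv r m0" "size m' = size m0 + k * (D - N)"
        by auto
      then have "y = int (size m')" using y m0 ND by (simp add: of_nat_diff)
      moreover have "size m' \<in> L" unfolding L_def using m'(1) m0(1) by (intro imageI) simp
      ultimately show "y \<in> int ` L" by blast
    qed
  qed
qed


lemma part3_E:
  assumes D: "D > 0" and r: "r = of_nat N / of_nat D" and cop: "coprime (int N) (int D)" and ND: "N > D"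
    and m1: "pv r m1 = x"
  defines "L \<equiv> size ` {m. pv r m = x}"
  shows "finite L \<and> L \<noteq> {} \<and> (\<exists>q. Max L = Min L + q * (N - D) \<and>
     int ` L = {int (Min L) + int k * (int N - int D) | k. k \<le> q})"
proof -
  have rr: "r = of_int (int N) / of_int (int D)" using r by simp
  have D': "int D > 0" using D by simp
  have N': "int N > 0" using ND by simp
  have r1: "r \<ge> 1" using r D ND by simp
  have Lne: "L \<noteq> {}" using m1 by (auto simp: L_def)
  have "L \<subseteq> {..nat \<lceil>x\<rceil>}"
  proof
    fix s assume "s \<in> L"
    then obtain m where m: "pv r m = x" "s = size m" by (auto simp: L_def)
    then have "of_nat s \<le> x" using pv_ge_size[OF r1, of m] by simp
    then have "\<lceil>(of_nat s :: rat)\<rceil> \<le> \<lceil>x\<rceil>" by (rule ceiling_mono)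
    then have "int s \<le> \<lceil>x\<rceil>" by simp
    then show "s \<in> {..nat \<lceil>x\<rceil>}" by simp
  qed
  then have fin: "finite L" by (rule finite_subset) simp
  have "Min L \<in> L" using fin Lne by simp
  then obtain m0 where m0: "pv r m0 = x" "size m0 = Min L" by (auto simp: L_def)
  have "Max L \<in> L" using fin Lne by simp
  then obtain mM where mM: "pv r mM = x" "size mM = Max L" by (auto simp: L_def)
  have inL: "size m \<in> L" if "pv r m = x" for m using that by (auto simp: L_def)
  have irr0: "\<forall>i. count m0 i < N"
  proof (rule ccontr)
    assume "\<not> ?thesis"
    then obtain j where j: "count m0 j \<ge> N" by (auto simp: not_less)
    define m' where "m' = m0 - replicate_mset N j + replicate_mset D (Suc j)"
    have t: "pv r m' = pv r m0" "size m' + N = size m0 + D"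
      using trade_up[OF D r j] unfolding m'_def by auto
    then have "size m' < size m0" using ND by linarith
    moreover have "Min L \<le> size m'" using inL[of m'] t m0 fin by simp
    ultimately show False using m0 by simp
  qed
  from desc_chain[OF D r ND, of mM] obtain w q where
    w: "\<forall>i. count w i < N" "pv r w = pv r mM" "size mM = size w + q * (N - D)"
       "\<forall>k\<le>q. \<exists>m'. pv r m' = pv r mM \<and> size m' = size mM - k * (N - D)" by blast
  have "w = m0" by (rule uniq_ms_up[OF N' D' cop rr]) (use w m0 mM irr0 in auto)
  then have MM: "Max L = Min L + q * (N - D)" using w(3) mM m0 by simp
  have "int ` L = {int (Min L) + int k * (int N - int D) | k. k \<le> q}"
  proof
    show "int ` L \<subseteq> {int (Min L) + int k * (int N - int D) | k. k \<le> q}"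
    proof
      fix y assume "y \<in> int ` L"
      then obtain m' where m': "pv r m' = x" "y = int (size m')" by (auto simp: L_def)
      have lo: "Min L \<le> size m'" using inL[OF m'(1)] fin by simp
      have hi: "size m' \<le> Max L" using inL[OF m'(1)] fin by simp
      have "(int N - int D) dvd (int (size m') - int (size m0))"
        by (rule size_cong[OF D' rr cop]) (use m' m0 in simp)
      then obtain t where t: "int (size m') - int (size m0) = (int N - int D) * t" by (auto simp: dvd_def)
      have c: "int N - int D > 0" using ND by simp
      have "(int N - int D) * t \<ge> 0" using t lo m0 by simp
      then have t0: "t \<ge> 0" using c zero_le_mult_iff by (metis not_less)
      have "int (Max L) = int (Min L) + (int N - int D) * int q" using MM ND by (simp add: of_nat_diff mult.commute)
      moreover have "int (size m') \<le> int (Max L)" using hi by simp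
      ultimately have "(int N - int D) * t \<le> (int N - int D) * int q" using t m0 by linarith
      then have "t \<le> int q" using c by simp
      then have "nat t \<le> q" by simp
      moreover have "y = int (Min L) + int (nat t) * (int N - int D)" using t t0 m' m0 by (simp add: algebra_simps)
      ultimately show "y \<in> {int (Min L) + int k * (int N - int D) | k. k \<le> q}" by blast
    qed
  next
    show "{int (Min L) + int k * (int N - int D) | k. k \<le> q} \<subseteq> int ` L"
    proof
      fix y assume "y \<in> {int (Min L) + int k * (int N - int D) | k. k \<le> q}"
      then obtain k where y: "y = int (Min L) + int k * (int N - int D)" and k: "k \<le> q" by blast
      from w(4) obtain m' where m': "pv r m' = pv r mM" "size m' = size mM - (q - k) * (N - D)"
        using k by (meson diff_le_self)
      have "(q - k) * (N - D) = q * (N - D) - k * (N - D)" by (simp add: diff_mult_distrib)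
      moreover have "k * (N - D) \<le> q * (N - D)" using k by simp
      ultimately have "size m' = Min L + k * (N - D)" using m' mM MM by simp
      then have "y = int (size m')" using y ND by (simp add: of_nat_diff)
      moreover have "size m' \<in> L" using inL[of m'] m' mM by simp
      ultimately show "y \<in> int ` L" by blast
    qed
  qed
  then show ?thesis using fin Lne MM by blast
qed


lemma not_atomic_N1:
  assumes D: "D > 1" and r: "r = 1 / of_nat D"
  shows "\<not> atomic (Sr r)"
proof
  assume at: "atomic (Sr r)"
  have rpos: "r > 0" using r D by simp
  have "atoms (Sr r) = {}"
  proof (rule ccontr)
    assume "atoms (Sr r) \<noteq> {}"
    then obtain a where a: "a \<in> atoms (Sr r)" by blast
    then obtain m where m: "a = pv r m" and nz: "a \<noteq> 0" and ata: "\<forall>b\<in>Sr r. \<forall>c\<in>Sr r. a = b + c \<longrightarrow> b = 0 \<or> c = 0"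
      unfolding atoms_def Sr_pv by blast
    then have "m \<noteq> {#}" by auto
    then obtain i m0 where m0: "m = add_mset i m0" by (metis multiset_cases)
    have "r ^ i = of_nat D * r ^ Suc i" using r D by simp
    also have "\<dots> = r ^ Suc i + of_nat (D - 1) * r ^ Suc i" using D by (simp add: of_nat_diff algebra_simps)
    finally have "a = pv r {#Suc i#} + pv r (replicate_mset (D - 1) (Suc i) + m0)" using m m0 by simp
    moreover have "pv r {#Suc i#} \<noteq> 0" using rpos by simp
    moreover have "pv r (replicate_mset (D - 1) (Suc i) + m0) \<noteq> 0"
    proof -
      have "replicate_mset (D - 1) (Suc i) + m0 \<noteq> {#}" using D by simp
      then show ?thesis using pv_zero_iff[OF rpos] by metis
    qed
    ultimately show False using ata unfolding Sr_pv by blast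
  qed
  moreover have "(1::rat) \<in> Sr r" unfolding Sr_pv by (rule range_eqI[of _ _ "{#0#}"]) simp
  ultimately have "Zf (Sr r) 1 \<noteq> {}" using at unfolding atomic_def by auto
  then obtain z where "set_mset z \<subseteq> atoms (Sr r)" "sum_mset z = 1" unfolding Zf_def by blast
  with \<open>atoms (Sr r) = {}\<close> show False by simp
qed

lemma Nats_pow: "(r::rat) \<in> \<nat> \<Longrightarrow> r ^ k \<in> \<nat>"
  by (elim Nats_cases) (metis of_nat_power of_nat_in_Nats)

lemma pv_Nats: "r \<in> \<nat> \<Longrightarrow> pv r m \<in> \<nat>"
  by (induction m) (auto intro: Nats_add Nats_pow)

lemma int_case:
  assumes "r \<in> \<nat>" "r > 0" "x \<in> Sr r"
  shows "\<exists>t. Zf (Sr r) x = {replicate_mset t 1} \<and> Lf (Sr r) x = {t}"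
proof -
  have SN: "Sr r \<subseteq> \<nat>" unfolding Sr_pv using pv_Nats[OF assms(1)] by blast
  have natS: "of_nat t \<in> Sr r" for t
    unfolding Sr_pv by (rule range_eqI[of _ _ "replicate_mset t 0"]) simp
  have ge1: "b \<ge> 1" if "b \<in> Sr r" "b \<noteq> 0" for b
  proof -
    from that SN obtain k where "b = of_nat k" by (auto elim: Nats_cases)
    with that show ?thesis by simp
  qed
  have atoms: "atoms (Sr r) = {1}"
  proof
    show "atoms (Sr r) \<subseteq> {1}"
    proof
      fix a assume a: "a \<in> atoms (Sr r)"
      then have aS: "a \<in> Sr r" and nz: "a \<noteq> 0" and ata: "\<forall>b\<in>Sr r. \<forall>c\<in>Sr r. a = b + c \<longrightarrow> b = 0 \<or> c = 0"
        unfolding atoms_def by auto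
      from aS SN obtain k where k: "a = of_nat k" by (auto elim: Nats_cases)
      show "a \<in> {1}"
      proof (rule ccontr)
        assume "a \<notin> {1}"
        then have "k \<ge> 2" using k nz by auto
        then have "a = 1 + of_nat (k - 1)" using k by (simp add: of_nat_diff)
        moreover have "(1::rat) \<in> Sr r" using natS[of 1] by simp
        moreover have "(of_nat (k - 1) :: rat) \<noteq> 0" using \<open>k \<ge> 2\<close> by simp
        ultimately show False using ata natS by fastforce
      qed
    qed
  next
    show "{1} \<subseteq> atoms (Sr r)"
    proof -
      have "(1::rat) \<in> Sr r" using natS[of 1] by simp
      moreover have "\<forall>b\<in>Sr r. \<forall>c\<in>Sr r. (1::rat) = b + c \<longrightarrow> b = 0 \<or> c = 0"
      proof (intro ballI impI, rule ccontr)
        fix b c assume "b \<in> Sr r" "c \<in> Sr r" "(1::rat) = b + c" "\<not> (b = 0 \<or> c = 0)"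
        then have "b \<ge> 1" "c \<ge> 1" using ge1 by auto
        then show False using \<open>(1::rat) = b + c\<close> by linarith
      qed
      ultimately show ?thesis unfolding atoms_def by auto
    qed
  qed
  from assms(3) SN obtain t where t: "x = of_nat t" by (auto elim: Nats_cases)
  have Z: "Zf (Sr r) x = {replicate_mset t 1}"
  proof
    show "Zf (Sr r) x \<subseteq> {replicate_mset t 1}"
    proof
      fix z assume "z \<in> Zf (Sr r) x"
      then have z: "set_mset z \<subseteq> {1}" "sum_mset z = x" unfolding Zf_def atoms by auto
      have zr: "z = replicate_mset (size z) 1" using z(1) by (rule set_mset_subset_singletonD)
      then have "sum_mset z = of_nat (size z)" by (metis sum_mset_replicate_mset mult_1_right)
      then have "size z = t" using z t by simp
      then show "z \<in> {replicate_mset t 1}" using zr by simp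
    qed
  next
    show "{replicate_mset t 1} \<subseteq> Zf (Sr r) x" unfolding Zf_def atoms using t by auto
  qed
  then have "Lf (Sr r) x = {t}" unfolding Lf_def by simp
  with Z show ?thesis by blast
qed



lemma ap_single: "arith_prog {a} d"
  unfolding arith_prog_def by (intro exI[of _ a] disjI1 exI[of _ 1]) auto

theorem theorem3p3:
  fixes r :: rat
  assumes "r > 0" and "atomic (Sr r)"
  shows
   "(r < 1 \<longrightarrow> (\<forall>x\<in>Sr r. (\<exists>z1\<in>Zf (Sr r) x. \<exists>z2\<in>Zf (Sr r) x. z1 \<noteq> z2) \<longrightarrow>
        int ` Lf (Sr r) x = {int (Inf (Lf (Sr r) x)) + int k * (denr r - numr r) | k::nat. True}))
  \<and> (r \<in> \<nat> \<longrightarrow> (\<forall>x\<in>Sr r. card (Zf (Sr r) x) = 1 \<and> card (Lf (Sr r) x) = 1))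
  \<and> (r > 1 \<and> r \<notin> \<nat> \<longrightarrow> (\<forall>x\<in>Sr r. (\<exists>z1\<in>Zf (Sr r) x. \<exists>z2\<in>Zf (Sr r) x. z1 \<noteq> z2) \<longrightarrow>
        int ` Lf (Sr r) x = {int (Min (Lf (Sr r) x)) + int k * (numr r - denr r) | k::nat.
            of_nat k \<le> (of_nat (Max (Lf (Sr r) x)) - of_nat (Min (Lf (Sr r) x))) / (of_int (numr r - denr r) :: rat)}))
  \<and> (\<forall>x\<in>Sr r. arith_prog (int ` Lf (Sr r) x) \<bar>numr r - denr r\<bar>)"
proof -
  note rp = rat_parts[OF assms(1)]
  define N where "N = nat (numr r)"
  define D where "D = nat (denr r)"
  have NN: "int N = numr r" "int D = denr r" using rp by (simp_all add: N_def D_def)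
  have D0: "D > 0" using rp NN by simp
  have r_eq: "r = of_nat N / of_nat D" using rp(4) NN by (metis of_int_of_nat_eq)
  have cop: "coprime (int N) (int D)" using rp(3) NN by simp
  show ?thesis
  proof (cases "r \<in> \<nat>")
    case True
    have r1: "\<not> r < 1"
    proof
      assume "r < 1"
      from True obtain k where "r = of_nat k" by (auto elim: Nats_cases)
      then show False using \<open>r < 1\<close> assms(1) by simp
    qed
    have P2: "\<forall>x\<in>Sr r. card (Zf (Sr r) x) = 1 \<and> card (Lf (Sr r) x) = 1"
    proof
      fix x assume "x \<in> Sr r"
      then obtain t where "Zf (Sr r) x = {replicate_mset t 1}" "Lf (Sr r) x = {t}"
        using int_case[OF True assms(1)] by blast
      then show "card (Zf (Sr r) x) = 1 \<and> card (Lf (Sr r) x) = 1" by simp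
    qed
    have P4: "\<forall>x\<in>Sr r. arith_prog (int ` Lf (Sr r) x) \<bar>numr r - denr r\<bar>"
    proof
      fix x assume "x \<in> Sr r"
      then obtain t where "Lf (Sr r) x = {t}" using int_case[OF True assms(1)] by blast
      then show "arith_prog (int ` Lf (Sr r) x) \<bar>numr r - denr r\<bar>" using ap_single by simp
    qed
    show ?thesis
    proof (intro conjI)
      show "r \<in> \<nat> \<longrightarrow> (\<forall>x\<in>Sr r. card (Zf (Sr r) x) = 1 \<and> card (Lf (Sr r) x) = 1)"
        using P2 by (rule impI)
    next
      show "\<forall>x\<in>Sr r. arith_prog (int ` Lf (Sr r) x) \<bar>numr r - denr r\<bar>" by (rule P4)
    qed (use r1 True in \<open>simp_all only: simp_thms\<close>)
  next
    case False
    have D1: "D \<noteq> 1"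
    proof
      assume "D = 1"
      then have "r = of_nat N" using r_eq by simp
      then show False using False by simp
    qed
    have rne1: "r \<noteq> 1" using False by auto
    have N1: "N > 1"
    proof (cases "r < 1")
      case True
      then have "N < D" using r_eq D0 by (simp add: divide_less_eq)
      show ?thesis
      proof (rule ccontr)
        assume "\<not> N > 1"
        then have "N = 1" using rp NN by linarith
        then have "r = 1 / of_nat D" using r_eq by simp
        then show False using not_atomic_N1[of D r] \<open>N < D\<close> \<open>N = 1\<close> assms(2) by simp
      qed
    next
      case False
      then have "r > 1" using rne1 by simp
      then have "N > D" using r_eq D0 by (simp add: less_divide_eq)
      then show ?thesis using D0 D1 by linarith
    qed
    have at: "atoms (Sr r) = range (\<lambda>i. r ^ i)" by (rule atoms_nonint[OF D0 r_eq cop D1 N1])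
    note Zc = Zf_char[OF at] and Lc = Lf_char[OF at]
    have two: "\<exists>m1 m2. m1 \<noteq> m2 \<and> pv r m1 = x \<and> pv r m2 = x"
      if "\<exists>z1\<in>Zf (Sr r) x. \<exists>z2\<in>Zf (Sr r) x. z1 \<noteq> z2" for x
    proof -
      from that obtain z1 z2 where z: "z1 \<in> Zf (Sr r) x" "z2 \<in> Zf (Sr r) x" "z1 \<noteq> z2" by blast
      from z(1) obtain m1 where m1: "z1 = image_mset (\<lambda>i. r ^ i) m1" "pv r m1 = x" unfolding Zc by blast
      from z(2) obtain m2 where m2: "z2 = image_mset (\<lambda>i. r ^ i) m2" "pv r m2 = x" unfolding Zc by blast
      have "m1 \<noteq> m2" using z(3) m1 m2 by blast
      then show ?thesis using m1 m2 by blast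
    qed
    have rep: "\<exists>m. pv r m = x" if "x \<in> Sr r" for x using that unfolding Sr_pv by blast
    show ?thesis
    proof (cases "r < 1")
      case True
      then have ND: "N < D" using r_eq D0 by (simp add: divide_less_eq)
      have P1: "\<forall>x\<in>Sr r. (\<exists>z1\<in>Zf (Sr r) x. \<exists>z2\<in>Zf (Sr r) x. z1 \<noteq> z2) \<longrightarrow>
        int ` Lf (Sr r) x = {int (Inf (Lf (Sr r) x)) + int k * (denr r - numr r) | k::nat. True}"
      proof (intro ballI impI)
        fix x assume "x \<in> Sr r" "\<exists>z1\<in>Zf (Sr r) x. \<exists>z2\<in>Zf (Sr r) x. z1 \<noteq> z2"
        then obtain m1 m2 where "m1 \<noteq> m2" "pv r m1 = x" "pv r m2 = x" using two by blast
        from part1_E[OF D0 r_eq cop ND this] show "int ` Lf (Sr r) x = {int (Inf (Lf (Sr r) x)) + int k * (denr r - numr r) | k::nat. True}"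
          unfolding Lc NN .
      qed
      have P4: "\<forall>x\<in>Sr r. arith_prog (int ` Lf (Sr r) x) \<bar>numr r - denr r\<bar>"
      proof
        fix x assume "x \<in> Sr r"
        then obtain m where m: "pv r m = x" using rep by blast
        show "arith_prog (int ` Lf (Sr r) x) \<bar>numr r - denr r\<bar>"
        proof (cases "\<exists>m1 m2. m1 \<noteq> m2 \<and> pv r m1 = x \<and> pv r m2 = x")
          case True
          then obtain m1 m2 where "m1 \<noteq> m2" "pv r m1 = x" "pv r m2 = x" by blast
          from part1_E[OF D0 r_eq cop ND this]
          have e: "int ` Lf (Sr r) x = {int (Inf (Lf (Sr r) x)) + int k * (int D - int N) | k. True}"
            unfolding Lc .
          have ab: "\<bar>numr r - denr r\<bar> = int D - int N" using NN ND by simp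
          show ?thesis unfolding e arith_prog_def ab
            by (intro exI[of _ "int (Inf (Lf (Sr r) x))"] disjI2) simp
        next
          case False
          then have "{m. pv r m = x} = {m}" using m by blast
          then have "Lf (Sr r) x = {size m}" unfolding Lc by simp
          then show ?thesis using ap_single by simp
        qed
      qed
      show ?thesis
        apply (intro conjI)
        subgoal using P1 by (rule impI)
        subgoal using \<open>r \<notin> \<nat>\<close> by (simp only: simp_thms)
        subgoal by (intro impI, elim conjE, rule FalseE) (use True in linarith)
        subgoal by (rule P4)
        done
    next
      case False
      then have "r > 1" using rne1 by simp
      then have ND: "N > D" using r_eq D0 by (simp add: less_divide_eq)
      have E3: "\<exists>q. Max (Lf (Sr r) x) = Min (Lf (Sr r) x) + q * (N - D) \<and>
         int ` Lf (Sr r) x = {int (Min (Lf (Sr r) x)) + int k * (int N - int D) | k. k \<le> q}"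
        if xS: "x \<in> Sr r" for x
      proof -
        obtain m where m: "pv r m = x" using rep[OF xS] by blast
        show ?thesis using part3_E[OF D0 r_eq cop ND m] unfolding Lc by blast
      qed
      have P3: "\<forall>x\<in>Sr r. (\<exists>z1\<in>Zf (Sr r) x. \<exists>z2\<in>Zf (Sr r) x. z1 \<noteq> z2) \<longrightarrow>
        int ` Lf (Sr r) x = {int (Min (Lf (Sr r) x)) + int k * (numr r - denr r) | k::nat.
            of_nat k \<le> (of_nat (Max (Lf (Sr r) x)) - of_nat (Min (Lf (Sr r) x))) / (of_int (numr r - denr r) :: rat)}"
      proof (intro ballI impI)
        fix x assume x: "x \<in> Sr r"
        obtain q where q: "Max (Lf (Sr r) x) = Min (Lf (Sr r) x) + q * (N - D)"
          "int ` Lf (Sr r) x = {int (Min (Lf (Sr r) x)) + int k * (int N - int D) | k. k \<le> q}"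
          using E3[OF x] by blast
        have "(of_nat (Max (Lf (Sr r) x)) - of_nat (Min (Lf (Sr r) x))) = (of_nat q * (of_nat N - of_nat D) :: rat)"
          using q(1) ND by (simp add: of_nat_diff)
        moreover have "(of_int (numr r - denr r) :: rat) = of_nat N - of_nat D" using NN by (metis of_int_diff of_int_of_nat_eq)
        moreover have "(of_nat N - of_nat D :: rat) \<noteq> 0" using ND by simp
        ultimately have c: "(of_nat (Max (Lf (Sr r) x)) - of_nat (Min (Lf (Sr r) x))) / (of_int (numr r - denr r) :: rat) = of_nat q"
          by simp
        show "int ` Lf (Sr r) x = {int (Min (Lf (Sr r) x)) + int k * (numr r - denr r) | k::nat.
            of_nat k \<le> (of_nat (Max (Lf (Sr r) x)) - of_nat (Min (Lf (Sr r) x))) / (of_int (numr r - denr r) :: rat)}"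
          unfolding c unfolding q(2) NN[symmetric] by simp
      qed
      have P4: "\<forall>x\<in>Sr r. arith_prog (int ` Lf (Sr r) x) \<bar>numr r - denr r\<bar>"
      proof
        fix x assume x: "x \<in> Sr r"
        obtain q where q: "int ` Lf (Sr r) x = {int (Min (Lf (Sr r) x)) + int k * (int N - int D) | k. k \<le> q}"
          using E3[OF x] by blast
        have ab: "\<bar>numr r - denr r\<bar> = int N - int D" using NN ND by simp
        have "{int (Min (Lf (Sr r) x)) + int k * (int N - int D) | k. k \<le> q} =
              {int (Min (Lf (Sr r) x)) + int i * (int N - int D) | i. i < Suc q}"
          by (simp add: less_Suc_eq_le)
        then show "arith_prog (int ` Lf (Sr r) x) \<bar>numr r - denr r\<bar>"
          unfolding q ab arith_prog_def by blast
      qed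
      show ?thesis
        apply (intro conjI)
        subgoal by (intro impI, rule FalseE) (use False in linarith)
        subgoal using \<open>r \<notin> \<nat>\<close> by (simp only: simp_thms)
        subgoal using P3 by (rule impI)
        subgoal by (rule P4)
        done
    qed
  qed
qed

end
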